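(* Let $u$ be a $C^2$ solution of $$ r\left(1+4u'^2+3u'^4\right) - 2u'\left(1+u'^2\right) + 2r\,u''\left(3u'^2-1\right)=0 \qquad (\ast)$$ with initial conditions $u(0)=0$, $u'(0)=0$, extended to its maximal interval of existence as a solution of $(\ast)$ (equivalently of $u''=-\frac{1+4u'^2+3u'^4}{2(3u'^2-1)}+\frac{u'(1+u'^2)}{r(3u'^2-1)}$ for $r>0$). Then the maximal domain is a bounded interval $[0,r_M)$ with $0<r_M<\infty$, and $\lim_{r\to r_M^-}u'(r)=\frac{1}{\sqrt3}$.
   Context: The solution with $u(0)=u'(0)=0$ exists locally in $C^2$ near $r=0$ and satisfies $u''(0)=1/4$. The coefficient $3u'^2-1$ of $u''$ in $(\ast)$ vanishes exactly when $u'=\pm 1/\sqrt3$. *)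

theory Defs
  imports "HOL-Analysis.Analysis"
begin

definition dom0 :: "ereal \<Rightarrow> real set" where
  "dom0 R = {r. 0 \<le> r \<and> ereal r < R}"

text \<open>u is a C^2 solution on [0,R) of the equation (*), written in the explicit
  (non-degenerate) form, i.e. with 3u'^2 - 1 nonzero, with u(0)=0, u'(0)=0.
  Derivatives at 0 are one-sided (within the domain).\<close>
definition ode_sol :: "(real \<Rightarrow> real) \<Rightarrow> ereal \<Rightarrow> bool" where
  "ode_sol u R \<longleftrightarrow> 0 \<in> dom0 R \<and>
     (\<exists>u1 u2. (\<forall>r\<in>dom0 R. (u has_real_derivative u1 r) (at r within dom0 R)
                       \<and> (u1 has_real_derivative u2 r) (at r within dom0 R))
            \<and> continuous_on (dom0 R) u2
            \<and> u 0 = 0 \<and> u1 0 = 0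
            \<and> (\<forall>r\<in>dom0 R. 3 * (u1 r)\<^sup>2 - 1 \<noteq> 0)
            \<and> (\<forall>r\<in>dom0 R. r * (1 + 4 * (u1 r)\<^sup>2 + 3 * (u1 r)^4) - 2 * u1 r * (1 + (u1 r)\<^sup>2)
                             + 2 * r * u2 r * (3 * (u1 r)\<^sup>2 - 1) = 0))"

definition maximal_ode_sol :: "(real \<Rightarrow> real) \<Rightarrow> ereal \<Rightarrow> bool" where
  "maximal_ode_sol u R \<longleftrightarrow> ode_sol u R \<and>
     \<not> (\<exists>v R'. R < R' \<and> ode_sol v R' \<and> (\<forall>r\<in>dom0 R. v r = u r))"

end

theory Submission
  imports Defs
begin


lemma ode_exists:
  fixes F D :: "real \<Rightarrow> real \<Rightarrow> real" and a y0 b H :: real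
  assumes H: "0 < H" and b: "0 < b"
    and contF: "continuous_on ({a..a+H} \<times> {y0-b..y0+b}) (\<lambda>z. F (fst z) (snd z))"
    and contD: "continuous_on ({a..a+H} \<times> {y0-b..y0+b}) (\<lambda>z. D (fst z) (snd z))"
    and der: "\<And>t y. t \<in> {a..a+H} \<Longrightarrow> y \<in> {y0-b..y0+b} \<Longrightarrow> (F t has_real_derivative D t y) (at y)"
  shows "\<exists>h>0. \<exists>y. y a = y0 \<and> (\<forall>t\<in>{a..a+h}. y t \<in> {y0-b..y0+b} \<and>
            (y has_real_derivative F t (y t)) (at t within {a..a+h}))"
proof -
  let ?B = "{a..a+H} \<times> {y0-b..y0+b}"
  have cB: "compact ?B" by (intro compact_Times compact_Icc)
  obtain M where M: "M > 0" "\<And>z. z \<in> ?B \<Longrightarrow> norm (F (fst z) (snd z)) \<le> M"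
    using compact_imp_bounded[OF compact_continuous_image[OF contF cB]]
    unfolding bounded_pos by auto
  obtain K where K: "K > 0" "\<And>z. z \<in> ?B \<Longrightarrow> norm (D (fst z) (snd z)) \<le> K"
    using compact_imp_bounded[OF compact_continuous_image[OF contD cB]]
    unfolding bounded_pos by auto
  have Mb: "\<bar>F t y\<bar> \<le> M" if "t \<in> {a..a+H}" "y \<in> {y0-b..y0+b}" for t y
    using M(2)[of "(t,y)"] that by auto
  have lip: "\<bar>F t y - F t z\<bar> \<le> K * \<bar>y - z\<bar>"
    if t: "t \<in> {a..a+H}" and yz: "y \<in> {y0-b..y0+b}" "z \<in> {y0-b..y0+b}" for t y z
  proof -
    have *: "\<bar>F t y - F t z\<bar> \<le> K * \<bar>y - z\<bar>" if "y < z" "y \<in> {y0-b..y0+b}" "z \<in> {y0-b..y0+b}" for y z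
    proof -
      have "\<And>x. y \<le> x \<Longrightarrow> x \<le> z \<Longrightarrow> DERIV (F t) x :> D t x"
        using der[OF t] that by auto
      from MVT2[OF \<open>y < z\<close> this] obtain w where w: "y < w" "w < z" "F t z - F t y = (z - y) * D t w"
        by blast
      have "\<bar>D t w\<bar> \<le> K" using K(2)[of "(t,w)"] t that w by auto
      then have "\<bar>(z - y) * D t w\<bar> \<le> \<bar>z - y\<bar> * K" by (simp add: abs_mult mult_left_mono)
      then show ?thesis using w by (simp add: abs_minus_commute mult.commute)
    qed
    show ?thesis
      using *[of y z] *[of z y] yz by (cases "y < z"; cases "z < y") (auto simp: abs_minus_commute)
  qed
  define h where "h = min H (min (b / M) (1 / (2 * K)))"
  have h1: "h \<le> b / M" "h \<le> 1 / (2 * K)" "h \<le> H" unfolding h_def by auto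
  have h: "0 < h" "h \<le> H" "M * h \<le> b" "K * h \<le> 1/2"
    using H b M K h1 by (auto simp: h_def pos_le_divide_eq mult.commute)
  define c where "c x = max a (min (a + h) x)" for x
  have c: "c x \<in> {a..a+h}" for x using h by (auto simp: c_def)
  have cc: "continuous_on UNIV c" unfolding c_def by (intro continuous_intros)
  have cid: "x \<in> {a..a+h} \<Longrightarrow> c x = x" for x by (auto simp: c_def)
  define S :: "(real \<Rightarrow>\<^sub>C real) set" where "S = PiC UNIV (\<lambda>_. {y0-b..y0+b})"
  have S_iff: "f \<in> S \<longleftrightarrow> (\<forall>x. apply_bcontfun f x \<in> {y0-b..y0+b})" for f
    by (simp add: S_def mem_PiC_iff Pi_def)
  have Scomp: "complete S"
    unfolding complete_eq_closed S_def by (rule closed_PiC) auto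
  have Sne: "const_bcontfun y0 \<in> S"
    using b by (simp add: S_iff const_bcontfun.rep_eq)
  define G where "G f s = F s (apply_bcontfun f s)" for f :: "real \<Rightarrow>\<^sub>C real" and s
  have Gcont: "continuous_on {a..a+h} (G f)" if "f \<in> S" for f
  proof -
    have "continuous_on {a..a+h} (\<lambda>s. (s, apply_bcontfun f s))"
      by (intro continuous_intros) auto
    moreover have "(\<lambda>s. (s, apply_bcontfun f s)) ` {a..a+h} \<subseteq> ?B"
      using that h by (auto simp: S_iff)
    ultimately have "continuous_on {a..a+h} ((\<lambda>z. F (fst z) (snd z)) \<circ> (\<lambda>s. (s, apply_bcontfun f s)))"
      by (intro continuous_on_compose continuous_on_subset[OF contF])
    then show ?thesis by (simp add: G_def o_def)
  qed
  have Gb: "\<bar>G f s\<bar> \<le> M" if "f \<in> S" "s \<in> {a..a+h}" for f s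
    using Mb[of s "apply_bcontfun f s"] that h by (auto simp: G_def S_iff)
  define I where "I f x = y0 + integral {a..c x} (G f)" for f x
  have Ibound: "\<bar>I f x - y0\<bar> \<le> b" if "f \<in> S" for f x
  proof -
    have "norm (integral {a..c x} (G f)) \<le> M * (c x - a)"
      by (rule integral_bound) (use c[of x] Gcont[OF that] Gb[OF that] in \<open>auto intro: continuous_on_subset\<close>)
    also have "\<dots> \<le> M * h" using c[of x] M by (intro mult_left_mono) auto
    finally show ?thesis using h by (simp add: I_def)
  qed
  have Icont: "continuous_on UNIV (I f)" if "f \<in> S" for f
  proof -
    have "continuous_on {a..a+h} (\<lambda>x. integral {a..x} (G f))"
      by (intro indefinite_integral_continuous_1 integrable_continuous_real Gcont that)
    then have "continuous_on UNIV ((\<lambda>x. integral {a..x} (G f)) \<circ> c)"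
      using c by (intro continuous_on_compose cc) (auto intro: continuous_on_subset)
    then show ?thesis unfolding I_def o_def by (intro continuous_intros)
  qed
  have Ibc: "I f \<in> bcontfun" if "f \<in> S" for f
  proof (rule bcontfun_normI[OF Icont[OF that]])
    fix x show "norm (I f x) \<le> \<bar>y0\<bar> + b" using Ibound[OF that, of x] by simp
  qed
  define T where "T f = Bcontfun (I f)" for f
  have Tapp: "apply_bcontfun (T f) = I f" if "f \<in> S" for f
    using Ibc[OF that] by (simp add: T_def Bcontfun_inverse)
  have TS: "T ` S \<subseteq> S"
  proof
    fix g assume "g \<in> T ` S"
    then obtain f where f: "f \<in> S" "g = T f" by auto
    show "g \<in> S" unfolding S_iff f(2) Tapp[OF f(1)] proof
      fix x show "I f x \<in> {y0-b..y0+b}" using Ibound[OF f(1), of x] by (auto simp: abs_le_iff)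
    qed
  qed
  have Tlip: "dist (T f) (T g) \<le> (1/2) * dist f g" if "f \<in> S" "g \<in> S" for f g
  proof (rule dist_bound)
    fix x
    have "norm (integral {a..c x} (\<lambda>s. G f s - G g s)) \<le> (K * dist f g) * (c x - a)"
    proof (rule integral_bound)
      show "a \<le> c x" using c[of x] by auto
      show "continuous_on {a..c x} (\<lambda>s. G f s - G g s)"
        using c[of x] by (intro continuous_intros continuous_on_subset[OF Gcont[OF that(1)]]
            continuous_on_subset[OF Gcont[OF that(2)]]) auto
      fix s assume s: "s \<in> {a..c x}"
      then have s': "s \<in> {a..a+H}" using c[of x] h by auto
      have "\<bar>G f s - G g s\<bar> \<le> K * \<bar>apply_bcontfun f s - apply_bcontfun g s\<bar>"
        unfolding G_def by (rule lip[OF s']) (use that in \<open>auto simp: S_iff\<close>)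
      also have "\<dots> \<le> K * dist f g"
        using dist_bounded[of f s g] K by (intro mult_left_mono) (auto simp: dist_real_def)
      finally show "norm (G f s - G g s) \<le> K * dist f g" by simp
    qed
    also have "\<dots> \<le> (K * dist f g) * h"
      using c[of x] K by (intro mult_left_mono) auto
    also have "\<dots> = (K * h) * dist f g" by simp
    also have "\<dots> \<le> (1/2) * dist f g" using h by (intro mult_right_mono) auto
    finally have *: "norm (integral {a..c x} (\<lambda>s. G f s - G g s)) \<le> (1/2) * dist f g" .
    have "integral {a..c x} (\<lambda>s. G f s - G g s) = integral {a..c x} (G f) - integral {a..c x} (G g)"
      using c[of x] by (intro integral_diff integrable_continuous_real
          continuous_on_subset[OF Gcont[OF that(1)]] continuous_on_subset[OF Gcont[OF that(2)]]) auto
    with * show "dist (T f x) (T g x) \<le> (1/2) * dist f g"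
      by (simp add: Tapp that I_def dist_real_def)
  qed
  obtain f where f: "f \<in> S" "T f = f"
    using Banach_fix[OF Scomp _ _ _ TS Tlip] Sne by auto
  define y where "y = apply_bcontfun f"
  have yI: "y x = I f x" for x using f Tapp[OF f(1)] by (simp add: y_def)
  show ?thesis
  proof (intro exI conjI ballI)
    show "0 < h" by fact
    show "y a = y0" using yI[of a] h by (simp add: I_def c_def)
    fix t assume t: "t \<in> {a..a+h}"
    show "y t \<in> {y0-b..y0+b}" using f(1) by (simp add: S_iff y_def)
    have d0: "((\<lambda>x. integral {a..x} (G f)) has_real_derivative G f t) (at t within {a..a+h})"
      by (rule integral_has_real_derivative[OF Gcont[OF f(1)] t])
    have "((\<lambda>x. y0 + integral {a..x} (G f)) has_real_derivative G f t) (at t within {a..a+h})"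
      using d0 by (auto intro!: derivative_eq_intros)
    then have "(y has_real_derivative G f t) (at t within {a..a+h})"
      by (rule has_field_derivative_transform_within[where d=1]) (use t in \<open>auto simp: yI I_def cid\<close>)
    then show "(y has_real_derivative F t (y t)) (at t within {a..a+h})"
      by (simp add: G_def y_def)
  qed
qed



definition Fq :: "real \<Rightarrow> real \<Rightarrow> real" where
  "Fq r y = (1 + y\<^sup>2) * (2 * y - r * (1 + 3 * y\<^sup>2)) / (2 * r * (3 * y\<^sup>2 - 1))"

definition DFq :: "real \<Rightarrow> real \<Rightarrow> real" where
  "DFq r y = ((2 * y * (2 * y - r * (1 + 3 * y\<^sup>2)) + (1 + y\<^sup>2) * (2 - 6 * r * y)) * (2 * r * (3 * y\<^sup>2 - 1))
     - (1 + y\<^sup>2) * (2 * y - r * (1 + 3 * y\<^sup>2)) * (12 * r * y)) / (2 * r * (3 * y\<^sup>2 - 1))\<^sup>2"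

lemma ode_eq_iff:
  fixes r y z :: real
  assumes "r \<noteq> 0" "3 * y\<^sup>2 - 1 \<noteq> 0"
  shows "(r * (1 + 4 * y\<^sup>2 + 3 * y^4) - 2 * y * (1 + y\<^sup>2) + 2 * r * z * (3 * y\<^sup>2 - 1) = 0) \<longleftrightarrow> z = Fq r y"
proof -
  have "r * (1 + 4 * y\<^sup>2 + 3 * y^4) - 2 * y * (1 + y\<^sup>2) + 2 * r * z * (3 * y\<^sup>2 - 1)
        = (2 * r * (3 * y\<^sup>2 - 1)) * (z - Fq r y)"
    using assms by (simp add: Fq_def field_simps)
  then show ?thesis using assms by simp
qed

lemma Fq_deriv:
  assumes "r \<noteq> 0" "3 * y\<^sup>2 - 1 \<noteq> 0"
  shows "(Fq r has_real_derivative DFq r y) (at y)"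
proof -
  have "((\<lambda>y. (1 + y\<^sup>2) * (2 * y - r * (1 + 3 * y\<^sup>2)) / (2 * r * (3 * y\<^sup>2 - 1))) has_real_derivative DFq r y) (at y)"
    using assms unfolding DFq_def
    by (auto intro!: derivative_eq_intros simp: power2_eq_square algebra_simps)
  then show ?thesis by (simp add: Fq_def[abs_def])
qed



lemma cont_extend_right:
  fixes f :: "real \<Rightarrow> real"
  assumes ab: "a < b" and fc: "continuous_on {a..<b} f" and fl: "(f \<longlongrightarrow> l) (at_left b)"
  shows "continuous_on {a..b} (\<lambda>x. if x < b then f x else l)"
  unfolding continuous_on_eq_continuous_within
proof
  fix x assume x: "x \<in> {a..b}"
  show "continuous (at x within {a..b}) (\<lambda>x. if x < b then f x else l)"
  proof (cases "x = b")
    case True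
    have ev: "eventually (\<lambda>z. f z = (if z < b then f z else l)) (at_left b)"
      using eventually_at_left_real[OF ab] by eventually_elim auto
    have "((\<lambda>x. if x < b then f x else l) \<longlongrightarrow> l) (at_left b)"
      using tendsto_cong[OF ev] fl by simp
    then show ?thesis using True ab by (simp add: continuous_within at_within_Icc_at_left)
  next
    case False
    then have xb: "x < b" using x by auto
    have at: "at x within {a..b} = at x within {a..<b}"
      by (rule at_within_nhd[of x "{..<b}"]) (use xb in auto)
    have "(f \<longlongrightarrow> f x) (at x within {a..<b})"
      using fc x xb by (simp add: continuous_on_def)
    moreover have "eventually (\<lambda>z. f z = (if z < b then f z else l)) (at x within {a..<b})"
      by (auto simp: eventually_at_filter)
    ultimately have "((\<lambda>x. if x < b then f x else l) \<longlongrightarrow> f x) (at x within {a..<b})"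
      using tendsto_cong by fastforce
    then show ?thesis using xb by (simp add: continuous_within at)
  qed
qed

lemma extension:
  fixes u p q :: "real \<Rightarrow> real" and \<rho> L :: real
  assumes rho: "0 < \<rho>"
    and dv: "\<And>r. r \<in> {0..<\<rho>} \<Longrightarrow> (u has_real_derivative p r) (at r within {0..<\<rho>})
                  \<and> (p has_real_derivative q r) (at r within {0..<\<rho>})"
    and qc: "continuous_on {0..<\<rho>} q"
    and u0: "u 0 = 0" and p0: "p 0 = 0"
    and nz: "\<And>r. r \<in> {0..<\<rho>} \<Longrightarrow> 3 * (p r)\<^sup>2 - 1 \<noteq> 0"
    and eq: "\<And>r. r \<in> {0..<\<rho>} \<Longrightarrow> r * (1 + 4 * (p r)\<^sup>2 + 3 * (p r)^4) - 2 * p r * (1 + (p r)\<^sup>2)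
                             + 2 * r * q r * (3 * (p r)\<^sup>2 - 1) = 0"
    and pL: "(p \<longlongrightarrow> L) (at_left \<rho>)"
    and L: "3 * L\<^sup>2 < 1"
  shows "\<exists>h>0. \<exists>v. ode_sol v (ereal (\<rho> + h)) \<and> (\<forall>r\<in>{0..<\<rho>}. v r = u r)"
proof -
  define b where "b = (1 - 3 * L\<^sup>2) / 8"
  have b0: "0 < b" using L by (simp add: b_def)
  have box: "3 * y\<^sup>2 < 1" if "y \<in> {L-b..L+b}" for y
  proof -
    have b1: "b \<le> 1/8" using L by (simp add: b_def)
    have L1: "L\<^sup>2 < 1" using L by simp
    then have "\<bar>L\<bar> < 1" by (simp add: abs_square_less_1)
    have "\<bar>y\<bar> \<le> \<bar>L\<bar> + b" using that by auto
    then have "\<bar>y\<bar>\<^sup>2 \<le> (\<bar>L\<bar> + b)\<^sup>2" by (rule power_mono) simp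
    also have "\<dots> = L\<^sup>2 + 2 * \<bar>L\<bar> * b + b * b" by (simp add: power2_eq_square algebra_simps)
    also have "\<dots> \<le> L\<^sup>2 + 2 * b + b * b"
      using \<open>\<bar>L\<bar> < 1\<close> b0 by simp
    finally have y2: "y\<^sup>2 \<le> L\<^sup>2 + 2 * b + b * b" by simp
    have "b * b \<le> b / 8" using b0 b1 by (simp add: mult_left_mono)
    with y2 b0 have "3 * y\<^sup>2 \<le> 3 * L\<^sup>2 + 7 * b" by linarith
    also have "\<dots> < 1" unfolding b_def using L by (simp add: field_simps)
    finally show ?thesis .
  qed
  have contF: "continuous_on ({\<rho>..\<rho>+1} \<times> {L-b..L+b}) (\<lambda>z. Fq (fst z) (snd z))"
    unfolding Fq_def
    by (intro continuous_intros) (use rho box in \<open>fastforce dest: box\<close>)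
  have contD: "continuous_on ({\<rho>..\<rho>+1} \<times> {L-b..L+b}) (\<lambda>z. DFq (fst z) (snd z))"
    unfolding DFq_def
    by (intro continuous_intros) (use rho box in \<open>fastforce dest: box\<close>)
  have derF: "(Fq t has_real_derivative DFq t y) (at y)" if "t \<in> {\<rho>..\<rho>+1}" "y \<in> {L-b..L+b}" for t y
    by (rule Fq_deriv) (use that rho box[of y] in auto)
  obtain h y where h: "0 < h" and yL: "y \<rho> = L"
    and yb: "\<And>t. t \<in> {\<rho>..\<rho>+h} \<Longrightarrow> y t \<in> {L-b..L+b}"
    and yd: "\<And>t. t \<in> {\<rho>..\<rho>+h} \<Longrightarrow> (y has_real_derivative Fq t (y t)) (at t within {\<rho>..\<rho>+h})"
    using ode_exists[OF zero_less_one b0 contF contD derF] by blast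
  have y3: "3 * (y t)\<^sup>2 < 1" if "t \<in> {\<rho>..\<rho>+h}" for t using box yb that by blast
  have yc: "continuous_on {\<rho>..\<rho>+h} y" by (rule DERIV_continuous_on[OF yd])
  have qF: "q r = Fq r (p r)" if "r \<in> {0<..<\<rho>}" for r
    using eq[of r] nz[of r] that ode_eq_iff[of r "p r" "q r"] by auto
  have pc: "continuous_on {0..<\<rho>} p"
    by (rule DERIV_continuous_on[of _ _ q]) (use dv in blast)
  have qL: "(q \<longlongrightarrow> Fq \<rho> L) (at_left \<rho>)"
  proof -
    have "((\<lambda>r. Fq r (p r)) \<longlongrightarrow> Fq \<rho> L) (at_left \<rho>)"
      unfolding Fq_def
      by (intro tendsto_intros pL) (use rho L in auto)
    moreover have "eventually (\<lambda>r. Fq r (p r) = q r) (at_left \<rho>)"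
      using eventually_at_left_real[OF rho] by eventually_elim (use qF in auto)
    ultimately show ?thesis using tendsto_cong by fastforce
  qed
  define V where "V r = (if r < \<rho> then q r else Fq r (y r))" for r
  have Vc: "continuous_on {0..\<rho>+h} V"
  proof -
    have "continuous_on {0..\<rho>} (\<lambda>r. if r < \<rho> then q r else Fq \<rho> L)"
      by (rule cont_extend_right[OF rho qc qL])
    then have c1: "continuous_on {0..\<rho>} V"
      by (rule continuous_on_eq) (auto simp: V_def yL)
    have "continuous_on {\<rho>..\<rho>+h} (\<lambda>r. Fq r (y r))"
      unfolding Fq_def
      by (intro continuous_intros yc) (use rho y3 in \<open>fastforce\<close>)
    then have c2: "continuous_on {\<rho>..\<rho>+h} V"
      by (rule continuous_on_eq) (auto simp: V_def)
    have "continuous_on ({0..\<rho>} \<union> {\<rho>..\<rho>+h}) V"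
      by (rule continuous_on_closed_Un[OF _ _ c1 c2]) auto
    moreover have "{0..\<rho>} \<union> {\<rho>..\<rho>+h} = {0..\<rho>+h}" using rho h by auto
    ultimately show ?thesis by simp
  qed
  define P where "P r = integral {0..r} V" for r
  have Vint: "V integrable_on {0..r}" if "r \<le> \<rho> + h" for r
    using that by (intro integrable_continuous_real continuous_on_subset[OF Vc]) auto
  have Pp: "P r = p r" if r: "r \<in> {0..<\<rho>}" for r
  proof -
    have "(q has_integral (p r - p 0)) {0..r}"
    proof (rule fundamental_theorem_of_calculus)
      show "0 \<le> r" using r by auto
      fix x assume "x \<in> {0..r}"
      then have "x \<in> {0..<\<rho>}" using r by auto
      then have "(p has_vector_derivative q x) (at x within {0..<\<rho>})"
        using dv by (simp add: has_real_derivative_iff_has_vector_derivative)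
      then show "(p has_vector_derivative q x) (at x within {0..r})"
        by (rule has_vector_derivative_within_subset) (use r in auto)
    qed
    then have "(V has_integral p r) {0..r}"
      using r by (subst has_integral_cong[of _ _ q]) (auto simp: V_def p0)
    then show ?thesis by (simp add: P_def integral_unique)
  qed
  have Pc: "continuous_on {0..\<rho>+h} P"
    unfolding P_def by (intro indefinite_integral_continuous_1 Vint) simp
  have PrhoL: "P \<rho> = L"
  proof -
    have "(P \<longlongrightarrow> P \<rho>) (at \<rho> within {0..\<rho>})"
      using continuous_on_subset[OF Pc, of "{0..\<rho>}"] rho h
      by (simp add: continuous_on_def)
    then have "(P \<longlongrightarrow> P \<rho>) (at_left \<rho>)" using rho by (simp add: at_within_Icc_at_left)
    moreover have "eventually (\<lambda>r. p r = P r) (at_left \<rho>)"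
      using eventually_at_left_real[OF rho] by eventually_elim (use Pp in auto)
    ultimately have "(p \<longlongrightarrow> P \<rho>) (at_left \<rho>)" using tendsto_cong by fastforce
    with pL show ?thesis using tendsto_unique[of "at_left \<rho>"] by (simp add: trivial_limit_at_left_real)
  qed
  have Py: "P r = y r" if r: "r \<in> {\<rho>..\<rho>+h}" for r
  proof -
    have "integral {0..\<rho>} V + integral {\<rho>..r} V = integral {0..r} V"
      by (rule Henstock_Kurzweil_Integration.integral_combine) (use r rho Vint in auto)
    moreover have "integral {\<rho>..r} V = y r - y \<rho>"
    proof -
      have "((\<lambda>s. Fq s (y s)) has_integral (y r - y \<rho>)) {\<rho>..r}"
      proof (rule fundamental_theorem_of_calculus)
        show "\<rho> \<le> r" using r by auto
        fix x assume "x \<in> {\<rho>..r}"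
        then have "x \<in> {\<rho>..\<rho>+h}" using r by auto
        then have "(y has_vector_derivative Fq x (y x)) (at x within {\<rho>..\<rho>+h})"
          using yd by (simp add: has_real_derivative_iff_has_vector_derivative)
        then show "(y has_vector_derivative Fq x (y x)) (at x within {\<rho>..r})"
          by (rule has_vector_derivative_within_subset) (use r in auto)
      qed
      then have "(V has_integral (y r - y \<rho>)) {\<rho>..r}"
        by (subst has_integral_cong[of _ _ "\<lambda>s. Fq s (y s)"]) (auto simp: V_def)
      then show ?thesis by (simp add: integral_unique)
    qed
    ultimately show ?thesis using PrhoL yL by (simp add: P_def)
  qed
  define v where "v r = integral {0..r} P" for r
  have vu: "v r = u r" if r: "r \<in> {0..<\<rho>}" for r
  proof -
    have "(p has_integral (u r - u 0)) {0..r}"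
    proof (rule fundamental_theorem_of_calculus)
      show "0 \<le> r" using r by auto
      fix x assume "x \<in> {0..r}"
      then have "x \<in> {0..<\<rho>}" using r by auto
      then have "(u has_vector_derivative p x) (at x within {0..<\<rho>})"
        using dv by (simp add: has_real_derivative_iff_has_vector_derivative)
      then show "(u has_vector_derivative p x) (at x within {0..r})"
        by (rule has_vector_derivative_within_subset) (use r in auto)
    qed
    then have "(P has_integral u r) {0..r}"
      using r by (subst has_integral_cong[of _ _ p]) (auto simp: Pp u0)
    then show ?thesis by (simp add: v_def integral_unique)
  qed
  have dom: "dom0 (ereal (\<rho> + h)) = {0..<\<rho>+h}" by (auto simp: dom0_def)
  have d1: "(v has_real_derivative P r) (at r within {0..<\<rho> + h})
            \<and> (P has_real_derivative V r) (at r within {0..<\<rho> + h})" if r: "r \<in> {0..<\<rho> + h}" for r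
  proof
    have r': "r \<in> {0..\<rho>+h}" using r by auto
    have "(v has_real_derivative P r) (at r within {0..\<rho>+h})"
      unfolding v_def by (rule integral_has_real_derivative[OF Pc r'])
    then show "(v has_real_derivative P r) (at r within {0..<\<rho> + h})"
      by (rule has_field_derivative_subset) auto
    have "(P has_real_derivative V r) (at r within {0..\<rho>+h})"
      unfolding P_def by (rule integral_has_real_derivative[OF Vc r'])
    then show "(P has_real_derivative V r) (at r within {0..<\<rho> + h})"
      by (rule has_field_derivative_subset) auto
  qed
  have d2: "3 * (P r)\<^sup>2 - 1 \<noteq> 0" if r: "r \<in> {0..<\<rho> + h}" for r
  proof (cases "r < \<rho>")
    case True then show ?thesis using r nz[of r] Pp[of r] by auto
  next
    case False then show ?thesis using r y3[of r] Py[of r] by auto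
  qed
  have d3: "r * (1 + 4 * (P r)\<^sup>2 + 3 * P r ^ 4) - 2 * P r * (1 + (P r)\<^sup>2) + 2 * r * V r * (3 * (P r)\<^sup>2 - 1) = 0"
    if r: "r \<in> {0..<\<rho> + h}" for r
  proof (cases "r < \<rho>")
    case True then show ?thesis using r eq[of r] Pp[of r] by (auto simp: V_def)
  next
    case False
    then have "r \<in> {\<rho>..\<rho>+h}" "r \<noteq> 0" using r rho by auto
    then show ?thesis using y3[of r] Py[of r] ode_eq_iff[of r "y r" "Fq r (y r)"] False
      by (auto simp: V_def)
  qed
  have d4: "continuous_on {0..<\<rho> + h} V" by (rule continuous_on_subset[OF Vc]) auto
  have d5: "v 0 = 0" "P 0 = 0" by (simp_all add: v_def P_def)
  have d6: "0 \<in> {0..<\<rho> + h}" using rho h by auto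
  have sol: "ode_sol v (ereal (\<rho> + h))"
    unfolding ode_sol_def dom using d1 d2 d3 d4 d5 d6 by blast
  show ?thesis using sol vu h by blast
qed



lemma eq_mul:
  fixes y P Q :: real
  assumes "y * (1 + 4 * P\<^sup>2 + 3 * P^4) - 2 * P * (1 + P\<^sup>2) + 2 * y * Q * (3 * P\<^sup>2 - 1) = 0"
  shows "Q * (2 * y * (1 - 3 * P\<^sup>2)) = (1 + P\<^sup>2) * (y * (1 + 3 * P\<^sup>2) - 2 * P)"
  using assms by algebra

lemma eq_div:
  fixes y P Q :: real
  assumes "y \<noteq> 0" "y * (1 + 4 * P\<^sup>2 + 3 * P^4) - 2 * P * (1 + P\<^sup>2) + 2 * y * Q * (3 * P\<^sup>2 - 1) = 0"
  shows "2 * Q * (3 * P\<^sup>2 - 1) = 2 * (P / y) * (1 + P\<^sup>2) - (1 + P\<^sup>2) * (1 + 3 * P\<^sup>2)"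
proof -
  have "y * (2 * Q * (3 * P\<^sup>2 - 1)) = y * (2 * (P / y) * (1 + P\<^sup>2) - (1 + P\<^sup>2) * (1 + 3 * P\<^sup>2))"
    using assms(2) assms(1) by (simp add: field_simps) algebra
  then show ?thesis using assms(1) by simp
qed



lemma ereal_le_lt: "(a::real) \<le> c \<Longrightarrow> ereal c < R \<Longrightarrow> ereal a < R"
  using order.strict_trans1[of "ereal a" "ereal c" R] by simp

lemma ereal_lt_lt: "(a::real) < c \<Longrightarrow> ereal c < R \<Longrightarrow> ereal a < R"
  using ereal_le_lt[of a c R] by simp

theorem theorem2:
  fixes u :: "real \<Rightarrow> real" and R :: ereal
  assumes "maximal_ode_sol u R"
  shows "0 < R \<and> R < \<infinity> \<and>
         (deriv u \<longlongrightarrow> 1 / sqrt 3) (at_left (real_of_ereal R))"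
proof -
  have sol: "ode_sol u R" and nomax: "\<not> (\<exists>v R'. R < R' \<and> ode_sol v R' \<and> (\<forall>r\<in>dom0 R. v r = u r))"
    using assms by (auto simp: maximal_ode_sol_def)
  define D where "D = dom0 R"
  from sol obtain p q where D0: "0 \<in> D"
    and dv: "\<And>r. r \<in> D \<Longrightarrow> (u has_real_derivative p r) (at r within D) \<and> (p has_real_derivative q r) (at r within D)"
    and qc: "continuous_on D q" and u0: "u 0 = 0" and p0: "p 0 = 0"
    and nz: "\<And>r. r \<in> D \<Longrightarrow> 3 * (p r)\<^sup>2 - 1 \<noteq> 0"
    and eq: "\<And>r. r \<in> D \<Longrightarrow> r * (1 + 4 * (p r)\<^sup>2 + 3 * (p r)^4) - 2 * p r * (1 + (p r)\<^sup>2)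
                             + 2 * r * q r * (3 * (p r)\<^sup>2 - 1) = 0"
    unfolding ode_sol_def D_def by blast
  have Dmem: "r \<in> D \<longleftrightarrow> 0 \<le> r \<and> ereal r < R" for r by (simp add: D_def dom0_def)
  have R0: "0 < R" using D0 by (simp add: Dmem zero_ereal_def)
  have Dint: "z \<in> D" if "x \<in> D" "0 \<le> z" "z \<le> x" for x z
  proof -
    have "ereal z \<le> ereal x" using that by simp
    then show ?thesis using that unfolding Dmem using order.strict_trans1 by blast
  qed
  have pc: "continuous_on D p"
    by (rule DERIV_continuous_on[of _ _ q]) (use dv in blast)
  have atD: "at x within D = at x" if x: "x \<in> D" "0 < x" for x
  proof -
    obtain c where c: "ereal x < ereal c" "ereal c < R" using ereal_dense2 x by (metis Dmem)
    have "at x within D = at x within UNIV"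
      by (rule at_within_nhd[of x "{0<..<c}"]) (use x c in \<open>auto simp: Dmem intro: ereal_lt_lt\<close>)
    then show ?thesis by simp
  qed
  have pd: "(p has_real_derivative q x) (at x)" and ud: "(u has_real_derivative p x) (at x)"
    if "x \<in> D" "0 < x" for x
    using dv[OF that(1)] atD[OF that] by auto
  have s3: "3 * (1 / sqrt 3)\<^sup>2 = (1::real)" by (simp add: power_divide)
  have pb: "3 * (p x)\<^sup>2 < 1" if x: "x \<in> D" for x
  proof (rule ccontr)
    assume "\<not> 3 * (p x)\<^sup>2 < 1"
    with nz[OF x] have gt: "3 * (p x)\<^sup>2 > 1" by auto
    let ?s = "1 / sqrt 3 :: real"
    have s0: "?s > 0" by simp
    have "\<bar>p x\<bar> > ?s"
    proof (rule ccontr)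
      assume "\<not> \<bar>p x\<bar> > ?s"
      then have "\<bar>p x\<bar>\<^sup>2 \<le> ?s\<^sup>2" by (intro power_mono) auto
      then show False using gt s3 by simp
    qed
    have cx: "continuous_on {0..x} p"
      by (rule continuous_on_subset[OF pc]) (use x Dint in auto)
    have x0: "0 \<le> x" using x by (simp add: Dmem)
    obtain z where z: "0 \<le> z" "z \<le> x" "p z = ?s \<or> p z = - ?s"
    proof (cases "p x > 0")
      case True
      then show ?thesis using IVT'[of p 0 ?s x, OF _ _ x0 cx] \<open>\<bar>p x\<bar> > ?s\<close> p0 s0 that by auto
    next
      case False
      then show ?thesis using IVT2'[of p x "- ?s" 0, OF _ _ x0 cx] \<open>\<bar>p x\<bar> > ?s\<close> p0 s0 that by auto
    qed
    then have "3 * (p z)\<^sup>2 - 1 = 0" using s3 by auto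
    moreover have "z \<in> D" using Dint[OF x z(1,2)] .
    ultimately show False using nz by blast
  qed
  have qF: "q x = Fq x (p x)" if "x \<in> D" "0 < x" for x
    using eq[OF that(1)] nz[OF that(1)] that(2) ode_eq_iff[of x "p x" "q x"] by auto
  obtain c0 where c0: "0 < c0" "ereal c0 < R"
    using ereal_dense2[OF R0] by (auto simp: zero_ereal_def)
  have at0: "at 0 within D = at_right 0"
  proof -
    have "at 0 within D = at 0 within {0<..}"
      by (rule at_within_nhd[of 0 "{..<c0}"]) (use c0 in \<open>auto simp: Dmem intro: ereal_lt_lt\<close>)
    then show ?thesis by simp
  qed
  have q0: "q 0 = 1/4"
  proof -
    have "(p has_real_derivative q 0) (at_right 0)" using dv[OF D0] at0 by simp
    then have pq: "((\<lambda>y. p y / y) \<longlongrightarrow> q 0) (at_right 0)"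
      by (simp add: has_field_derivative_iff p0)
    have qt: "(q \<longlongrightarrow> q 0) (at_right 0)"
      using qc D0 at0 by (metis continuous_on_def)
    have pt: "(p \<longlongrightarrow> 0) (at_right 0)"
      using pc D0 at0 p0 by (metis continuous_on_def)
    have ev: "eventually (\<lambda>y. 2 * (p y / y) * (1 + (p y)\<^sup>2) - (1 + (p y)\<^sup>2) * (1 + 3 * (p y)\<^sup>2)
                = 2 * q y * (3 * (p y)\<^sup>2 - 1)) (at_right 0)"
      using eventually_at_right_real[OF c0(1)]
    proof eventually_elim
      case (elim y)
      then have "y \<in> D" using c0 by (auto simp: Dmem intro: ereal_lt_lt)
      then show ?case using eq_div[of y "p y" "q y"] eq elim by auto
    qed
    have l1: "((\<lambda>y. 2 * (p y / y) * (1 + (p y)\<^sup>2) - (1 + (p y)\<^sup>2) * (1 + 3 * (p y)\<^sup>2))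
                \<longlongrightarrow> 2 * q 0 * (1 + 0\<^sup>2) - (1 + 0\<^sup>2) * (1 + 3 * 0\<^sup>2)) (at_right 0)"
      by (intro tendsto_intros pq pt)
    have l2: "((\<lambda>y. 2 * q y * (3 * (p y)\<^sup>2 - 1)) \<longlongrightarrow> 2 * q 0 * (3 * 0\<^sup>2 - 1)) (at_right 0)"
      by (intro tendsto_intros qt pt)
    have "2 * q 0 * (1 + 0\<^sup>2) - (1 + 0\<^sup>2) * (1 + 3 * 0\<^sup>2) = 2 * q 0 * (3 * 0\<^sup>2 - (1::real))"
      using tendsto_unique[OF _ tendsto_cong[THEN iffD1, OF ev l1] l2] by simp
    then show ?thesis by simp
  qed
  define hh where "hh x = x * (1 + 3 * (p x)\<^sup>2) - 2 * p x" for x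
  obtain \<delta> where \<delta>: "0 < \<delta>" "\<And>x. 0 < x \<Longrightarrow> x < \<delta> \<Longrightarrow> hh x > 0"
  proof -
    have pq: "((\<lambda>y. p y / y) \<longlongrightarrow> q 0) (at_right 0)"
      using dv[OF D0] at0 by (simp add: has_field_derivative_iff p0)
    have pt: "(p \<longlongrightarrow> 0) (at_right 0)"
      using pc D0 at0 p0 by (metis continuous_on_def)
    have "((\<lambda>y. (1 + 3 * (p y)\<^sup>2) - 2 * (p y / y)) \<longlongrightarrow> (1 + 3 * 0\<^sup>2) - 2 * q 0) (at_right 0)"
      by (intro tendsto_intros pq pt)
    then have "eventually (\<lambda>y. (1 + 3 * (p y)\<^sup>2) - 2 * (p y / y) > 0) (at_right 0)"
      using q0 by (intro order_tendstoD(1)) auto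
    moreover have "eventually (\<lambda>y. y > (0::real)) (at_right 0)" by (rule eventually_at_right_less)
    ultimately have "eventually (\<lambda>y. hh y > 0) (at_right 0)"
    proof eventually_elim
      case (elim y)
      then have "y * ((1 + 3 * (p y)\<^sup>2) - 2 * (p y / y)) > 0" by simp
      then show ?case using elim by (simp add: hh_def algebra_simps)
    qed
    then obtain b where "b > 0" "\<And>y. y > 0 \<Longrightarrow> y < b \<Longrightarrow> hh y > 0"
      unfolding eventually_at_right_field by auto
    then show ?thesis using that by blast
  qed
  have hc: "continuous_on D hh" unfolding hh_def by (intro continuous_intros pc)
  have hd: "(hh has_real_derivative (1 + 3 * (p x)\<^sup>2) + x * (6 * p x * q x) - 2 * q x) (at x)"
    if "x \<in> D" "0 < x" for x
    unfolding hh_def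
    by (rule derivative_eq_intros refl pd[OF that] | simp add: algebra_simps power2_eq_square)+
  have hpos: "hh x > 0" if x: "x \<in> D" "0 < x" for x
  proof (rule ccontr)
    assume "\<not> hh x > 0"
    then have hx: "hh x \<le> 0" by simp
    define a0 where "a0 = min (\<delta>/2) (x/2)"
    have a0: "0 < a0" "a0 < x" "a0 < \<delta>" using \<delta>(1) x(2) by (auto simp: a0_def)
    have ha0: "hh a0 > 0" using \<delta>(2) a0 by auto
    have cI: "continuous_on {a0..x} hh"
      by (rule continuous_on_subset[OF hc]) (use x a0 Dint in auto)
    define Z where "Z = {z \<in> {a0..x}. hh z = 0}"
    have Zne: "Z \<noteq> {}"
      using IVT2'[of hh x 0 a0, OF hx _ _ cI] ha0 a0 by (auto simp: Z_def)
    have Zc: "closed Z" unfolding Z_def by (rule continuous_closed_preimage_constant[OF cI]) simp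
    have Zb: "bdd_below Z" unfolding Z_def by (rule bdd_belowI[of _ a0]) auto
    define t where "t = Inf Z"
    have tZ: "t \<in> Z" unfolding t_def by (rule closed_contains_Inf[OF Zne Zb Zc])
    have tmin: "t \<le> z" if "z \<in> Z" for z unfolding t_def by (rule cInf_lower[OF that Zb])
    have t: "a0 \<le> t" "t \<le> x" "hh t = 0" using tZ by (auto simp: Z_def)
    have ta0: "a0 < t" using t ha0 by (cases "a0 = t") auto
    have tD: "t \<in> D" using Dint[OF x(1)] t a0 by auto
    have before: "hh z > 0" if zz: "a0 \<le> z" "z < t" for z
    proof (rule ccontr)
      assume "\<not> hh z > 0"
      then have "hh z \<le> 0" by simp
      moreover have "continuous_on {a0..z} hh" by (rule continuous_on_subset[OF cI]) (use that t in auto)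
      ultimately obtain w where "a0 \<le> w" "w \<le> z" "hh w = 0"
        using IVT2'[of hh z 0 a0] ha0 zz by auto
      then have "w \<in> Z" using zz t by (auto simp: Z_def)
      then show False using tmin[of w] \<open>w \<le> z\<close> \<open>z < t\<close> by auto
    qed
    have qt: "q t = 0"
    proof -
      have "2 * p t - t * (1 + 3 * (p t)\<^sup>2) = 0" using t(3) by (simp add: hh_def)
      then show ?thesis using qF[OF tD] ta0 a0 by (simp add: Fq_def)
    qed
    have "(hh has_real_derivative (1 + 3 * (p t)\<^sup>2)) (at t)"
      using hd[OF tD] qt ta0 a0 by simp
    then obtain d where d: "d > 0" "\<And>e. e > 0 \<Longrightarrow> e < d \<Longrightarrow> hh (t - e) < hh t"
      using DERIV_pos_inc_left[of hh "1 + 3 * (p t)\<^sup>2" t] by (auto simp: add_pos_nonneg)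
    define e where "e = min (d/2) ((t - a0)/2)"
    have e1: "e \<le> (t - a0)/2" "e \<le> d/2" unfolding e_def by (rule min.cobounded2, rule min.cobounded1)
    have e: "e > 0" "e < d" "a0 \<le> t - e" "t - e < t" using d(1) ta0 e1 by (auto simp: e_def)
    show False using d(2)[OF e(1,2)] before[OF e(3,4)] t(3) by simp
  qed
  have qpos: "q x > 0" if x: "x \<in> D" "0 < x" for x
  proof -
    have "q x * (2 * x * (1 - 3 * (p x)\<^sup>2)) = (1 + (p x)\<^sup>2) * hh x"
      using eq_mul[OF eq[OF x(1)]] by (simp add: hh_def)
    moreover have "(1 + (p x)\<^sup>2) * hh x > 0" using hpos[OF x] by (simp add: add_pos_nonneg)
    moreover have "2 * x * (1 - 3 * (p x)\<^sup>2) > 0" using pb[OF x(1)] x(2) by simp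
    ultimately show ?thesis by (metis zero_less_mult_pos2)
  qed
  have pmono: "p x \<le> p y" if "0 \<le> x" "x \<le> y" "y \<in> D" for x y
  proof (rule DERIV_nonneg_imp_increasing_open[OF that(2)])
    fix z assume z: "x < z" "z < y"
    then have zD: "z \<in> D" "0 < z" using Dint[OF that(3)] that by auto
    show "\<exists>d. (p has_real_derivative d) (at z) \<and> 0 \<le> d"
      using pd[OF zD] qpos[OF zD] by (auto intro: less_imp_le)
  next
    show "continuous_on {x..y} p" by (rule continuous_on_subset[OF pc]) (use that Dint in auto)
  qed
  have p35: "p x < 3/5" if "x \<in> D" for x
  proof (rule ccontr)
    assume "\<not> p x < 3/5"
    then have "(3/5)\<^sup>2 \<le> (p x)\<^sup>2" by (intro power_mono) auto
    then show False using pb[OF that] by (simp add: power2_eq_square)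
  qed
  have Rfin: "R \<noteq> \<infinity>"
  proof
    assume Rinf: "R = \<infinity>"
    then have inD: "x \<in> D" if "0 \<le> x" for x using that by (simp add: Dmem)
    have q5: "q x \<ge> 1/5" if x: "2 \<le> x" for x
    proof (rule ccontr)
      assume "\<not> q x \<ge> 1/5"
      then have qlt: "q x < 1/5" by simp
      have xD: "x \<in> D" "0 < x" using inD x by auto
      have e1: "q x * (2 * x * (1 - 3 * (p x)\<^sup>2)) = (1 + (p x)\<^sup>2) * hh x"
        using eq_mul[OF eq[OF xD(1)]] by (simp add: hh_def)
      have A: "0 < 1 - 3 * (p x)\<^sup>2" "1 - 3 * (p x)\<^sup>2 \<le> 1" using pb[OF xD(1)] by auto
      have hpx: "hh x > 0" using hpos[OF xD] .
      have "hh x \<le> (1 + (p x)\<^sup>2) * hh x" using hpx by (simp add: algebra_simps)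
      have "hh x \<ge> x - 6/5"
      proof -
        have "x * (1 + 3 * (p x)\<^sup>2) \<ge> x" using xD by simp
        then show ?thesis using p35[OF xD(1)] by (simp add: hh_def)
      qed
      have "q x * (2 * x * (1 - 3 * (p x)\<^sup>2)) < (1/5) * (2 * x * (1 - 3 * (p x)\<^sup>2))"
        by (rule mult_strict_right_mono[OF qlt]) (use A xD in simp)
      also have "\<dots> \<le> (1/5) * (2 * x)" using A xD by simp
      finally show False
        using e1 \<open>hh x \<le> (1 + (p x)\<^sup>2) * hh x\<close> \<open>hh x \<ge> x - 6/5\<close> x by linarith
    qed
    have "p 2 - 2/5 \<le> p 10 - 10/5"
    proof (rule DERIV_nonneg_imp_nondecreasing[of 2 10 "\<lambda>x. p x - x/5"])
      fix x :: real assume x: "2 \<le> x" "x \<le> 10"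
      then have xD: "x \<in> D" "0 < x" using inD by auto
      have "((\<lambda>x. p x - x/5) has_real_derivative q x - 1/5) (at x)"
        using pd[OF xD] by (auto intro!: derivative_eq_intros)
      then show "\<exists>y. ((\<lambda>x. p x - x/5) has_real_derivative y) (at x) \<and> y \<ge> 0"
        using q5[OF x(1)] by auto
    qed simp
    moreover have "p 0 \<le> p 2" using pmono[of 0 2] inD by simp
    moreover have "p 10 < 3/5" using p35 inD by simp
    ultimately show False using p0 by simp
  qed
  obtain \<rho> where R\<rho>: "R = ereal \<rho>" using Rfin R0 by (cases R) auto
  have \<rho>0: "0 < \<rho>" using R0 R\<rho> by (simp add: zero_ereal_def)
  have Deq: "D = {0..<\<rho>}" by (auto simp: Dmem R\<rho>)
  define L where "L = Sup (p ` {0..<\<rho>})"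
  have bdd: "bdd_above (p ` {0..<\<rho>})"
    by (rule bdd_aboveI[of _ "3/5"]) (use p35 Deq in \<open>force intro: less_imp_le\<close>)
  have pupper: "p x \<le> L" if "x \<in> {0..<\<rho>}" for x
    unfolding L_def by (rule cSup_upper) (use that bdd in auto)
  have L0: "0 \<le> L" using pupper[of 0] p0 \<rho>0 by simp
  have pL: "(p \<longlongrightarrow> L) (at_left \<rho>)"
  proof (rule order_tendstoI)
    fix a assume "a < L"
    then obtain x where x: "x \<in> {0..<\<rho>}" "a < p x"
      using less_cSup_iff[of "p ` {0..<\<rho>}" a] bdd \<rho>0 unfolding L_def by auto
    have "x < \<rho>" using x by auto
    show "eventually (\<lambda>z. a < p z) (at_left \<rho>)"
      using eventually_at_left_real[OF \<open>x < \<rho>\<close>]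
    proof eventually_elim
      case (elim z)
      then have "p x \<le> p z" using pmono[of x z] x by (auto simp: Deq)
      then show ?case using x by simp
    qed
  next
    fix a assume "L < a"
    show "eventually (\<lambda>z. p z < a) (at_left \<rho>)"
      using eventually_at_left_real[OF \<rho>0]
    proof eventually_elim
      case (elim z)
      then show ?case using pupper[of z] \<open>L < a\<close> by auto
    qed
  qed
  have L1: "3 * L\<^sup>2 \<le> 1"
  proof (rule tendsto_le[of "at_left \<rho>" "\<lambda>_. 1" 1 "\<lambda>z. 3 * (p z)\<^sup>2"])
    show "((\<lambda>z. 3 * (p z)\<^sup>2) \<longlongrightarrow> 3 * L\<^sup>2) (at_left \<rho>)" by (intro tendsto_intros pL)
    show "eventually (\<lambda>z. 3 * (p z)\<^sup>2 \<le> 1) (at_left \<rho>)"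
      using eventually_at_left_real[OF \<rho>0]
      by eventually_elim (use pb Deq in \<open>auto intro: less_imp_le\<close>)
  qed (auto simp: trivial_limit_at_left_real)
  have L3: "3 * L\<^sup>2 = 1"
  proof (rule ccontr)
    assume "3 * L\<^sup>2 \<noteq> 1"
    with L1 have Llt: "3 * L\<^sup>2 < 1" by simp
    have dv': "\<And>r. r \<in> {0..<\<rho>} \<Longrightarrow> (u has_real_derivative p r) (at r within {0..<\<rho>})
                  \<and> (p has_real_derivative q r) (at r within {0..<\<rho>})"
      using dv by (simp add: Deq)
    obtain h v where "h > 0" "ode_sol v (ereal (\<rho> + h))" "\<forall>r\<in>{0..<\<rho>}. v r = u r"
      using extension[OF \<rho>0 dv' qc[unfolded Deq] u0 p0 _ _ pL Llt] nz eq by (auto simp: Deq)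
    moreover have "R < ereal (\<rho> + h)" using \<open>h > 0\<close> by (simp add: R\<rho>)
    ultimately show False using nomax unfolding D_def[symmetric] Deq by blast
  qed
  have Lval: "L = 1 / sqrt 3"
  proof -
    have "L\<^sup>2 = 1/3" using L3 by simp
    then have "sqrt (1/3) = L" using L0 by (metis real_sqrt_unique)
    then show ?thesis by (simp add: real_sqrt_divide)
  qed
  have "(deriv u \<longlongrightarrow> 1 / sqrt 3) (at_left \<rho>)"
  proof -
    have "eventually (\<lambda>z. p z = deriv u z) (at_left \<rho>)"
      using eventually_at_left_real[OF \<rho>0]
    proof eventually_elim
      case (elim z)
      then have "z \<in> D" "0 < z" by (auto simp: Deq)
      then show ?case using DERIV_imp_deriv[OF ud] by simp
    qed
    then show ?thesis using pL Lval tendsto_cong by fastforce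
  qed
  then show ?thesis using R0 R\<rho> by simp
qed

end
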